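(* Let $\|\cdot\|_u$ be a unitarily-invariant norm on $\mathbb{M}_n(\mathbb{C})$, let $P\in\mathbb{M}_n(\mathbb{C})$ be an (orthogonal) projection and let $Q\in\mathbb{M}_n(\mathbb{C})$ be an idempotent ($Q^2=Q$). If $\|P\|_u=\|Q\|_u$ and $\|I_n-P\|_u=\|I_n-Q\|_u$, then $Q$ is an orthogonal projection (i.e. $Q=Q^*$).
   Context: A norm $\|\cdot\|_u$ on $\mathbb{M}_n(\mathbb{C})$ is unitarily-invariant if $\|UXV\|_u=\|X\|_u$ for all $X$ and all unitaries $U,V$. A projection means $P=P^2=P^*$. *)

theory Defs
  imports "HOL-Analysis.Analysis"
begin

definition cadj :: "complex ^'n^'m \<Rightarrow> complex ^'m^'n" where
  "cadj A = (\<chi> i j. cnj (A $ j $ i))"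

definition unitary_mat :: "complex ^'n^'n \<Rightarrow> bool" where
  "unitary_mat U \<longleftrightarrow> U ** cadj U = mat 1 \<and> cadj U ** U = mat 1"

definition is_matrix_norm :: "(complex ^'n^'n \<Rightarrow> real) \<Rightarrow> bool" where
  "is_matrix_norm N \<longleftrightarrow>
     (\<forall>X. 0 \<le> N X) \<and> (\<forall>X. N X = 0 \<longleftrightarrow> X = 0) \<and>
     (\<forall>c X. N ((\<chi> i j. c * X $ i $ j)) = cmod c * N X) \<and>
     (\<forall>X Y. N (X + Y) \<le> N X + N Y)"

definition unitarily_invariant_norm :: "(complex ^'n^'n \<Rightarrow> real) \<Rightarrow> bool" where
  "unitarily_invariant_norm N \<longleftrightarrow> is_matrix_norm N \<and>
     (\<forall>X U V. unitary_mat U \<longrightarrow> unitary_mat V \<longrightarrow> N (U ** X ** V) = N X)"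

definition orth_projection :: "complex ^'n^'n \<Rightarrow> bool" where
  "orth_projection P \<longleftrightarrow> P ** P = P \<and> cadj P = P"

end

theory Submission
  imports Defs
begin

definition sm :: "complex \<Rightarrow> complex^'n^'n \<Rightarrow> complex^'n^'n" where
  "sm c X = (\<chi> i j. c * X $ i $ j)"

definition diagm :: "('n \<Rightarrow> complex) \<Rightarrow> complex^'n^'n" where
  "diagm d = (\<chi> i j. if i = j then d i else 0)"

definition ind :: "'n set \<Rightarrow> complex^'n^'n" where
  "ind S = diagm (\<lambda>i. if i \<in> S then 1 else 0)"

lemma mm_entry: "(A ** B) $ i $ j = (\<Sum>k\<in>UNIV. A $ i $ k * B $ k $ j)"
  by (simp add: matrix_matrix_mult_def)

lemma cadj_entry[simp]: "cadj A $ i $ j = cnj (A $ j $ i)"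
  by (simp add: cadj_def)

lemma sm_entry[simp]: "sm c X $ i $ j = c * X $ i $ j"
  by (simp add: sm_def)

lemma diagm_entry[simp]: "diagm d $ i $ j = (if i = j then d i else 0)"
  by (simp add: diagm_def)

lemma mat_entry[simp]: "mat k $ i $ j = (if i = j then k else 0)"
  by (simp add: mat_def)

lemma cadj_cadj[simp]: "cadj (cadj A) = A"
  by (simp add: vec_eq_iff)

lemma cadj_mult: "cadj (A ** B) = cadj B ** cadj (A::complex^'n^'n)"
  by (simp add: vec_eq_iff mm_entry mult.commute)

lemma cadj_add: "cadj (A + B) = cadj A + cadj B"
  by (simp add: vec_eq_iff)

lemma cadj_diff: "cadj (A - B) = cadj A - cadj B"
  by (simp add: vec_eq_iff)

lemma cadj_mat[simp]: "cadj (mat 1 :: complex^'n^'n) = mat 1"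
  by (simp add: vec_eq_iff)

lemma sum_delta_l: fixes f :: "'n::finite \<Rightarrow> complex" shows "(\<Sum>k\<in>UNIV. (if i = k then a else 0) * f k) = (a * f i :: complex)"
proof -
  have "(\<Sum>k\<in>UNIV. (if i = k then a else 0) * f k) = (\<Sum>k\<in>UNIV. if i = k then a * f k else 0)"
    by (rule sum.cong) auto
  then show ?thesis by simp
qed

lemma sum_delta_r: fixes f :: "'n::finite \<Rightarrow> complex" shows "(\<Sum>k\<in>UNIV. f k * (if k = j then a k else 0)) = (f j * a j :: complex)"
proof -
  have "(\<Sum>k\<in>UNIV. f k * (if k = j then a k else 0)) = (\<Sum>k\<in>UNIV. if k = j then f k * a k else 0)"
    by (rule sum.cong) auto
  then show ?thesis by simp
qed

lemma diagm_mult_left: "diagm d ** A = (\<chi> i j. d i * A $ i $ j)"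
  by (simp add: vec_eq_iff mm_entry sum_delta_l)

lemma diagm_mult_right: "A ** diagm d = (\<chi> i j. A $ i $ j * d j)"
  by (simp add: vec_eq_iff mm_entry sum_delta_r)

lemma sm_mult_left: "sm c A ** B = sm c (A ** B)"
  by (simp add: vec_eq_iff mm_entry sum_distrib_left mult.assoc)

lemma sm_mult_right: "A ** sm c B = sm c (A ** B)"
  by (simp add: vec_eq_iff mm_entry sum_distrib_left mult_ac)

lemma unitary_cadj: "unitary_mat U \<Longrightarrow> unitary_mat (cadj U)"
  by (simp add: unitary_mat_def)

lemma unitary_mult: "unitary_mat U \<Longrightarrow> unitary_mat V \<Longrightarrow> unitary_mat (U ** V)"
proof -
  assume u: "unitary_mat U" and v: "unitary_mat V"
  have "(U ** V) ** cadj (U ** V) = U ** (V ** cadj V) ** cadj U"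
    by (simp add: cadj_mult matrix_mul_assoc)
  also have "\<dots> = mat 1" using u v by (simp add: unitary_mat_def)
  finally have 1: "(U ** V) ** cadj (U ** V) = mat 1" .
  have "cadj (U ** V) ** (U ** V) = cadj V ** (cadj U ** U) ** V"
    by (simp add: cadj_mult matrix_mul_assoc)
  also have "\<dots> = mat 1" using u v by (simp add: unitary_mat_def)
  finally show ?thesis using 1 by (simp add: unitary_mat_def)
qed

lemma unitaryI: "cadj U ** U = mat 1 \<Longrightarrow> unitary_mat (U::complex^'n^'n)"
  by (simp add: unitary_mat_def matrix_left_right_inverse)

lemma unitary_mat1: "unitary_mat (mat 1 :: complex^'n^'n)"
  by (simp add: unitary_mat_def)

lemma unitary_diagm: "(\<And>i. cmod (d i) = 1) \<Longrightarrow> unitary_mat (diagm d)"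
proof (rule unitaryI)
  assume d: "\<And>i. cmod (d i) = 1"
  have "\<And>i. cnj (d i) * d i = 1"
    using d by (metis complex_norm_square mult.commute of_real_1 power_one)
  then show "cadj (diagm d) ** diagm d = mat 1"
    by (auto simp: vec_eq_iff diagm_mult_right)
qed

context fixes N :: "complex^'n^'n \<Rightarrow> real" assumes uin: "unitarily_invariant_norm N"
begin

lemma N_nonneg: "0 \<le> N X" using uin by (simp add: unitarily_invariant_norm_def is_matrix_norm_def)
lemma N_zero_iff: "N X = 0 \<longleftrightarrow> X = 0" using uin by (simp add: unitarily_invariant_norm_def is_matrix_norm_def)
lemma N_sm: "N (sm c X) = cmod c * N X" using uin unfolding sm_def by (simp add: unitarily_invariant_norm_def is_matrix_norm_def)
lemma N_tri: "N (X + Y) \<le> N X + N Y" using uin by (simp add: unitarily_invariant_norm_def is_matrix_norm_def)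
lemma N_unit: "unitary_mat U \<Longrightarrow> unitary_mat V \<Longrightarrow> N (U ** X ** V) = N X"
  using uin by (simp add: unitarily_invariant_norm_def)
lemma N_unit_left: "unitary_mat U \<Longrightarrow> N (U ** X) = N X"
  using N_unit[of U "mat 1" X] unitary_mat1 by simp
lemma N_unit_right: "unitary_mat V \<Longrightarrow> N (X ** V) = N X"
  using N_unit[of "mat 1" V X] unitary_mat1 by simp

lemma N_uminus: "N (- X) = N X"
proof -
  have "- X = sm (-1) X" by (simp add: vec_eq_iff)
  then show ?thesis using N_sm[of "-1" X] by simp
qed

lemma N_sum: "finite F \<Longrightarrow> N (sum f F) \<le> (\<Sum>x\<in>F. N (f x))"
proof (induction F rule: finite_induct)
  case empty then show ?case using N_zero_iff[of 0] by simp
next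
  case (insert x F)
  have "N (sum f (insert x F)) = N (f x + sum f F)" using insert(1,2) by simp
  also have "\<dots> \<le> N (f x) + N (sum f F)" by (rule N_tri)
  also have "\<dots> \<le> N (f x) + (\<Sum>x\<in>F. N (f x))" using insert(3) by simp
  finally show ?case using insert(1,2) by simp
qed

lemma N_avg: "X = sm (1/2) (A + B) \<Longrightarrow> N A \<le> N C \<Longrightarrow> N B \<le> N C \<Longrightarrow> N X \<le> N C"
  using N_sm[of "1/2" "A+B"] N_tri[of A B] by simp

end

definition permm :: "('n \<Rightarrow> 'n) \<Rightarrow> complex^'n^'n" where
  "permm p = (\<chi> i j. if i = p j then 1 else 0)"

lemma sum_bij_delta:
  fixes g :: "'n::finite \<Rightarrow> complex"
  assumes "bij p"
  shows "(\<Sum>k\<in>UNIV. if a = p k then g k else 0) = g (inv p a)"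
proof -
  have "\<And>k. (a = p k) = (k = inv p a)"
    using assms by (metis bij_inv_eq_iff)
  then have "(\<Sum>k\<in>UNIV. if a = p k then g k else 0) = (\<Sum>k\<in>UNIV. if k = inv p a then g k else 0)"
    by simp
  then show ?thesis by simp
qed

lemma unitary_permm: assumes "bij p" shows "unitary_mat (permm p)"
proof (rule unitaryI)
  have "\<And>a b. (\<Sum>k\<in>UNIV. cnj (if k = p a then 1 else 0) * (if k = p b then 1 else (0::complex)))
       = (if a = b then 1 else 0)"
  proof -
    fix a b
    have "(\<Sum>k\<in>UNIV. cnj (if k = p a then 1 else 0) * (if k = p b then 1 else (0::complex)))
       = (\<Sum>k\<in>UNIV. if k = p a then (if p a = p b then 1 else 0) else 0)"
      by (rule sum.cong) auto
    also have "\<dots> = (if a = b then 1 else 0)"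
      using assms by (simp add: bij_def inj_eq)
    finally show "?thesis a b" .
  qed
  then show "cadj (permm p) ** permm p = mat 1"
    by (simp add: vec_eq_iff mm_entry permm_def)
qed

lemma permm_diagm:
  assumes "bij p"
  shows "permm p ** diagm d ** cadj (permm p) = diagm (d \<circ> inv p)"
proof -
  have 1: "permm p ** diagm d = (\<chi> i j. if i = p j then d j else 0)"
    by (simp add: diagm_mult_right permm_def vec_eq_iff)
  have "\<And>a b. (\<Sum>k\<in>UNIV. (if a = p k then d k else 0) * cnj (if b = p k then 1 else 0))
     = (if a = b then d (inv p a) else 0)"
  proof -
    fix a b
    have "(\<Sum>k\<in>UNIV. (if a = p k then d k else 0) * cnj (if b = p k then 1 else 0))
      = (\<Sum>k\<in>UNIV. if a = p k then (if b = p k then d k else 0) else 0)"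
      by (rule sum.cong) auto
    also have "\<dots> = (if b = p (inv p a) then d (inv p a) else 0)"
      using sum_bij_delta[OF assms] by simp
    also have "\<dots> = (if a = b then d (inv p a) else 0)"
      using assms by (metis bij_inv_eq_iff)
    finally show "?thesis a b" .
  qed
  then show ?thesis
    unfolding 1 by (simp add: vec_eq_iff mm_entry permm_def)
qed

lemma ind_bij: assumes "bij p" shows "ind (p ` S) = diagm ((\<lambda>i. if i \<in> S then 1 else 0) \<circ> inv p)"
proof -
  have "\<And>x. (x \<in> p ` S) = (inv p x \<in> S)"
  proof
    fix x assume "x \<in> p ` S" then obtain y where "y \<in> S" "x = p y" by blast
    then show "inv p x \<in> S" using assms by (simp add: bij_is_inj)
  next
    fix x assume "inv p x \<in> S"
    moreover have "p (inv p x) = x" using assms by (simp add: bij_is_surj surj_f_inv_f)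
    ultimately show "x \<in> p ` S" by (metis imageI)
  qed
  then show ?thesis unfolding ind_def by (simp add: o_def)
qed

lemma ex_perm_image:
  fixes T S :: "'n::finite set"
  assumes "card T = card S"
  shows "\<exists>p. bij p \<and> p ` T = S"
proof -
  from finite_same_card_bij[OF finite finite assms] obtain h where h: "bij_betw h T S" by blast
  have "card (- T) = card (- S)"
    using assms card_Diff_subset[of T UNIV] card_Diff_subset[of S UNIV] by (simp add: Compl_eq_Diff_UNIV)
  from finite_same_card_bij[OF finite finite this] obtain h' where h': "bij_betw h' (- T) (- S)" by blast
  define p where "p x = (if x \<in> T then h x else h' x)" for x
  have "bij_betw p T S = bij_betw h T S" by (rule bij_betw_cong) (simp add: p_def)
  with h have 1: "bij_betw p T S" by simp
  have "bij_betw p (- T) (- S) = bij_betw h' (- T) (- S)" by (rule bij_betw_cong) (simp add: p_def)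
  with h' have 2: "bij_betw p (- T) (- S)" by simp
  have "bij_betw p (T \<union> - T) (S \<union> - S)" by (rule bij_betw_combine[OF 1 2]) blast
  then have "bij p" by simp
  moreover have "p ` T = S" using 1 by (simp add: bij_betw_def)
  ultimately show ?thesis by blast
qed

context fixes N :: "complex^'n^'n \<Rightarrow> real" assumes uin: "unitarily_invariant_norm N"
begin

lemma phi_bij: assumes p: "bij p" shows "N (ind (p ` S)) = N (ind S)"
proof -
  have "ind (p ` S) = permm p ** ind S ** cadj (permm p)"
    unfolding ind_bij[OF p] by (simp add: permm_diagm[OF p] ind_def)
  then show ?thesis
    using N_unit[OF uin unitary_permm[OF p] unitary_cadj[OF unitary_permm[OF p]], of "ind S"] by simp
qed

lemma phi_mono: assumes "T \<subseteq> S" shows "N (ind T) \<le> N (ind S)"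
proof -
  define \<sigma> where "\<sigma> i = (if i \<in> T then 1 else - 1 :: complex)" for i
  have u: "unitary_mat (diagm \<sigma>)" by (rule unitary_diagm) (simp add: \<sigma>_def)
  have "ind T = sm (1/2) (ind S + ind S ** diagm \<sigma>)"
    using assms by (auto simp: vec_eq_iff ind_def diagm_mult_right \<sigma>_def)
  then show ?thesis
    by (rule N_avg[OF uin]) (simp_all add: N_unit_right[OF uin u])
qed

lemma phi_card: assumes "card T \<le> card S" shows "N (ind T) \<le> N (ind S)"
proof -
  obtain S' where S': "S' \<subseteq> S" "card S' = card T"
    using assms by (metis obtain_subset_with_card_n)
  obtain p where p: "bij p" "p ` T = S'" using ex_perm_image[of T S'] S'(2) by auto
  have "N (ind T) = N (ind S')" using phi_bij[OF p(1), of T] p(2) by simp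
  also have "\<dots> \<le> N (ind S)" by (rule phi_mono[OF S'(1)])
  finally show ?thesis .
qed

end

definition Em :: "'n \<Rightarrow> 'n \<Rightarrow> complex^'n^'n" where
  "Em a b = (\<chi> r c. if r = a \<and> c = b then 1 else 0)"

lemma sum_split2:
  fixes f :: "'n::finite \<Rightarrow> complex"
  assumes "i \<noteq> j"
  shows "(\<Sum>k\<in>UNIV. f k) = f i + f j + (\<Sum>k\<in>UNIV - {i, j}. f k)"
proof -
  have "(\<Sum>k\<in>UNIV. f k) = (\<Sum>k\<in>{i,j}. f k) + (\<Sum>k\<in>UNIV - {i, j}. f k)"
    by (metis add.commute finite sum.subset_diff top_greatest)
  then show ?thesis using assms by simp
qed

lemma sum_rest_delta:
  fixes r c :: "'n::finite"
  shows "(\<Sum>k\<in>UNIV - {i, j}. if k = r then (if k = c then 1 else 0) else (0::complex))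
     = (if r = c \<and> r \<noteq> i \<and> r \<noteq> j then 1 else 0)"
proof -
  have "(\<Sum>k\<in>UNIV - {i, j}. if k = r then (if k = c then 1 else 0) else (0::complex))
      = (\<Sum>k\<in>UNIV - {i, j}. if k = r then (if r = c then 1 else 0) else (0::complex))"
    by (rule sum.cong) auto
  also have "\<dots> = (if r = c \<and> r \<noteq> i \<and> r \<noteq> j then 1 else 0)"
    by (simp add: sum.delta)
  finally show ?thesis .
qed

lemma sum_delta_l2: fixes f :: "'n::finite \<Rightarrow> complex"
  shows "(\<Sum>k\<in>UNIV. (if k = i then a else 0) * f k) = a * f i"
proof -
  have "(\<Sum>k\<in>UNIV. (if k = i then a else 0) * f k) = (\<Sum>k\<in>UNIV. if k = i then a * f k else 0)"
    by (rule sum.cong) auto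
  then show ?thesis by simp
qed

lemma rot_lemma:
  fixes i j :: "'n::finite" and t s :: real
  assumes ij: "i \<noteq> j" "i \<in> S" "j \<notin> S" and t: "t > 0"
    and s: "s = sqrt (1 + t^2)"
    and Z: "Z = (\<chi> k r. if k = i then (if r = i then complex_of_real (1/s) else if r = j then complex_of_real (-t/s) else 0)
          else if k = j then (if r = i then complex_of_real (t/s) else if r = j then complex_of_real (1/s) else 0)
          else (if k = r then 1 else 0))"
  shows "unitary_mat Z"
    and "(ind S + sm (complex_of_real t) (Em i j)) ** Z = ind S + sm (complex_of_real (s - 1)) (ind {i})"
proof -
  have "0 < 1 + t^2" by (simp add: add_pos_nonneg)
  then have spos: "s > 0" using s by simp
  have s2: "s * s = 1 + t * t" using s by (simp add: power2_eq_square[symmetric])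
  have "(1/s) * (1/s) + (t/s) * (t/s) = (1 + t * t) / (s * s)" using spos by (simp add: field_simps)
  then have k1: "(1/s) * (1/s) + (t/s) * (t/s) = 1" using spos s2 by (metis div_self mult_pos_pos order_less_irrefl)
  have "1/s + t * (t/s) = (1 + t * t) / s" using spos by (simp add: field_simps)
  then have k2: "1/s + t * (t/s) = s" using spos s2 by (metis nonzero_mult_div_cancel_left order_less_irrefl)
  have K1: "complex_of_real (1/s) * complex_of_real (1/s) + complex_of_real (t/s) * complex_of_real (t/s) = 1"
    using k1 by (metis of_real_1 of_real_add of_real_mult)
  then have K1b: "complex_of_real (t/s) * complex_of_real (t/s) + complex_of_real (1/s) * complex_of_real (1/s) = 1"
    by (metis add.commute)
  have K2: "complex_of_real (1/s) + complex_of_real t * complex_of_real (t/s) = complex_of_real s"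
    using k2 by (metis of_real_add of_real_mult)
  have "\<And>r c. (cadj Z ** Z) $ r $ c = mat 1 $ r $ c"
  proof -
    fix r c
    have "(cadj Z ** Z) $ r $ c = cnj (Z $ i $ r) * Z $ i $ c + cnj (Z $ j $ r) * Z $ j $ c
        + (\<Sum>k\<in>UNIV - {i, j}. cnj (Z $ k $ r) * Z $ k $ c)"
      unfolding mm_entry cadj_entry by (rule sum_split2[OF ij(1)])
    also have "(\<Sum>k\<in>UNIV - {i, j}. cnj (Z $ k $ r) * Z $ k $ c)
        = (\<Sum>k\<in>UNIV - {i, j}. if k = r then (if k = c then 1 else 0) else (0::complex))"
      by (rule sum.cong) (auto simp: Z)
    finally show "(cadj Z ** Z) $ r $ c = mat 1 $ r $ c"
      using ij(1) K1 K1b by (auto simp: sum_rest_delta Z mult.commute)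
  qed
  then show "unitary_mat Z" by (intro unitaryI) (simp add: vec_eq_iff)
  have "\<And>r c. ((ind S + sm (complex_of_real t) (Em i j)) ** Z) $ r $ c
      = (ind S + sm (complex_of_real (s - 1)) (ind {i})) $ r $ c"
  proof -
    fix r c
    have "((ind S + sm (complex_of_real t) (Em i j)) ** Z) $ r $ c
       = (\<Sum>k\<in>UNIV. (if r = k then (if r \<in> S then 1 else 0) else 0) * Z $ k $ c)
         + (\<Sum>k\<in>UNIV. (if k = j then (if r = i then complex_of_real t else 0) else 0) * Z $ k $ c)"
      unfolding mm_entry sum.distrib[symmetric]
      by (rule sum.cong) (auto simp: ind_def Em_def distrib_right)
    also have "\<dots> = (if r \<in> S then 1 else 0) * Z $ r $ c + (if r = i then complex_of_real t else 0) * Z $ j $ c"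
      by (simp only: sum_delta_l sum_delta_l2)
    finally show "?thesis r c"
      using ij K2 by (auto simp: Z ind_def)
  qed
  then show "(ind S + sm (complex_of_real t) (Em i j)) ** Z = ind S + sm (complex_of_real (s - 1)) (ind {i})"
    by (simp add: vec_eq_iff)
qed

definition pinch :: "'n set \<Rightarrow> complex^'n^'n \<Rightarrow> complex^'n^'n" where
  "pinch T A = (\<chi> a b. if (a \<in> T) = (b \<in> T) then A $ a $ b else 0)"

lemma cadj_ind[simp]: "cadj (ind S) = ind S"
  by (simp add: vec_eq_iff ind_def)

lemma cadj_sm_real: "cadj (sm (complex_of_real t) X) = sm (complex_of_real t) (cadj X)"
  by (simp add: vec_eq_iff)

lemma cadj_Em: "cadj (Em a b) = Em b a"
  by (auto simp: vec_eq_iff Em_def)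

lemma cadj_sm: "cadj (sm c X) = sm (cnj c) (cadj X)"
  by (simp add: vec_eq_iff)

context fixes N :: "complex^'n^'n \<Rightarrow> real" assumes uin: "unitarily_invariant_norm N"
begin

lemma N_pinch: "N (pinch T A) \<le> N A"
proof -
  define \<sigma> where "\<sigma> i = (if i \<in> T then 1 else - 1 :: complex)" for i
  have u: "unitary_mat (diagm \<sigma>)" by (rule unitary_diagm) (simp add: \<sigma>_def)
  have "pinch T A = sm (1/2) (A + diagm \<sigma> ** A ** diagm \<sigma>)"
    by (auto simp: vec_eq_iff pinch_def diagm_mult_right diagm_mult_left \<sigma>_def)
  then show ?thesis
    by (rule N_avg[OF uin]) (simp_all add: N_unit[OF uin u u])
qed

lemma strict_diag:
  assumes i: "i \<in> S" and a: "a > 0"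
  shows "N (ind S) < N (ind S + sm (complex_of_real a) (ind {i}))"
proof -
  define D where "D x = ind S + sm (complex_of_real a) (ind {x})" for x
  have eqn: "N (D x) = N (D i)" if x: "x \<in> S" for x
  proof -
    define p where "p k = (if k = i then x else if k = x then i else k)" for k
    have pp: "p \<circ> p = id" by (auto simp: p_def fun_eq_iff)
    then have bp: "bij p" using o_bij by blast
    have ip: "inv p = p" using pp by (metis inv_unique_comp)
    have "permm p ** D i ** cadj (permm p) = D x"
    proof -
      have "D i = diagm (\<lambda>k. (if k \<in> S then 1 else 0) + complex_of_real a * (if k = i then 1 else 0))"
        by (auto simp: vec_eq_iff D_def ind_def)
      then have "permm p ** D i ** cadj (permm p) = diagm ((\<lambda>k. (if k \<in> S then 1 else 0) + complex_of_real a * (if k = i then 1 else 0)) \<circ> p)"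
        using permm_diagm[OF bp] ip by simp
      also have "\<dots> = D x"
        using i x by (auto simp: vec_eq_iff D_def ind_def p_def)
      finally show ?thesis .
    qed
    then show ?thesis
      using N_unit[OF uin unitary_permm[OF bp] unitary_cadj[OF unitary_permm[OF bp]], of "D i"] by simp
  qed
  have fin: "finite S" by simp
  define k where "k = card S"
  have kpos: "k > 0" using i fin k_def card_gt_0_iff by blast
  have "sum D S = sm (of_nat k + complex_of_real a) (ind S)"
  proof -
    have "\<And>r c. (sum D S) $ r $ c = sm (of_nat k + complex_of_real a) (ind S) $ r $ c"
    proof -
      fix r c
      have "(sum D S) $ r $ c = (\<Sum>x\<in>S. (if r = c \<and> r \<in> S then 1 else 0) + complex_of_real a * (if r = c \<and> r = x then 1 else 0))"
        by (auto simp: D_def ind_def intro!: sum.cong)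
      also have "\<dots> = of_nat k * (if r = c \<and> r \<in> S then 1 else 0) + complex_of_real a * (\<Sum>x\<in>S. (if r = c \<and> r = x then 1 else 0))"
        by (simp add: sum.distrib sum_distrib_left k_def)
      also have "(\<Sum>x\<in>S. (if r = c \<and> r = x then 1 else (0::complex))) = (if r = c \<and> r \<in> S then 1 else 0)"
        by (cases "r = c") (auto simp: sum.delta)
      finally show "(sum D S) $ r $ c = sm (of_nat k + complex_of_real a) (ind S) $ r $ c"
        by (simp add: ind_def algebra_simps)
    qed
    then show ?thesis by (simp add: vec_eq_iff)
  qed
  then have "N (sm (of_nat k + complex_of_real a) (ind S)) \<le> (\<Sum>x\<in>S. N (D x))"
    using N_sum[OF uin fin, of D] by simp
  also have "\<dots> = (\<Sum>x\<in>S. N (D i))" using eqn by (intro sum.cong) auto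
  also have "\<dots> = real k * N (D i)" by (simp add: k_def)
  finally have 1: "(real k + a) * N (ind S) \<le> real k * N (D i)"
  proof -
    assume h: "N (sm (of_nat k + complex_of_real a) (ind S)) \<le> real k * N (D i)"
    have "cmod (of_nat k + complex_of_real a) = real k + a"
      using a by (metis norm_of_real of_real_add of_real_of_nat_eq abs_of_nonneg add_nonneg_nonneg
          of_nat_0_le_iff order_less_imp_le)
    then show ?thesis using h N_sm[OF uin] by simp
  qed
  have "ind S \<noteq> 0" using i by (auto simp: vec_eq_iff ind_def)
  then have "N (ind S) > 0" using N_nonneg[OF uin] N_zero_iff[OF uin] by (metis order_le_less)
  then have "a * N (ind S) > 0" using a by simp
  then have "real k * N (ind S) < real k * N (D i)" using 1 by (simp add: algebra_simps)
  then show ?thesis using kpos by (simp add: D_def)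
qed

lemma strict_E:
  assumes ij: "i \<in> S" "j \<notin> S" and t: "t > 0"
  shows "N (ind S) < N (ind S + sm (complex_of_real t) (Em i j))"
    and "N (ind S) < N (ind S + sm (complex_of_real t) (Em j i))"
proof -
  have ij1: "i \<noteq> j" using ij by auto
  define s where "s = sqrt (1 + t^2)"
  define Z where "Z = ((\<chi> k r. if k = i then (if r = i then complex_of_real (1/s) else if r = j then complex_of_real (-t/s) else 0)
          else if k = j then (if r = i then complex_of_real (t/s) else if r = j then complex_of_real (1/s) else 0)
          else (if k = r then 1 else 0)) :: complex^'n^'n)"
  note R = rot_lemma[OF ij1 ij t s_def Z_def]
  have "t^2 > 0" using t by simp
  then have "1 < sqrt (1 + t^2)" by (simp add: real_less_rsqrt)
  then have s1: "s - 1 > 0" by (simp add: s_def)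
  have e1: "N (ind S + sm (complex_of_real t) (Em i j)) = N (ind S + sm (complex_of_real (s - 1)) (ind {i}))"
    using N_unit_right[OF uin R(1), of "ind S + sm (complex_of_real t) (Em i j)"] R(2) by simp
  then show "N (ind S) < N (ind S + sm (complex_of_real t) (Em i j))"
    using strict_diag[OF ij(1) s1] by simp
  have "cadj Z ** (ind S + sm (complex_of_real t) (Em j i)) = cadj ((ind S + sm (complex_of_real t) (Em i j)) ** Z)"
    by (simp add: cadj_mult cadj_add cadj_sm_real cadj_Em)
  also have "\<dots> = ind S + sm (complex_of_real (s - 1)) (ind {i})"
    unfolding R(2) cadj_add cadj_sm_real by simp
  finally have "N (ind S + sm (complex_of_real t) (Em j i)) = N (ind S + sm (complex_of_real (s - 1)) (ind {i}))"
    using N_unit_left[OF uin unitary_cadj[OF R(1)], of "ind S + sm (complex_of_real t) (Em j i)"] by simp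
  then show "N (ind S) < N (ind S + sm (complex_of_real t) (Em j i))"
    using strict_diag[OF ij(1) s1] by simp
qed

end

lemma phase_unit: "x \<noteq> 0 \<Longrightarrow> cmod (cnj x / complex_of_real (cmod x)) = 1"
  by (simp add: norm_divide)

lemma phase_mult: "x \<noteq> 0 \<Longrightarrow> x * (cnj x / complex_of_real (cmod x)) = complex_of_real (cmod x)"
  by (simp add: complex_norm_square[symmetric] power2_eq_square)

lemma pinch_entry: "pinch T A $ a $ b = (if (a \<in> T) = (b \<in> T) then A $ a $ b else 0)"
  by (simp add: pinch_def)

lemma ind_entry: "ind S $ a $ b = (if a = b \<and> a \<in> S then 1 else 0)"
  by (simp add: ind_def)

lemma Em_entry: "Em i j $ a $ b = (if a = i \<and> b = j then 1 else 0)"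
  by (simp add: Em_def)

context fixes N :: "complex^'n^'n \<Rightarrow> real" assumes uin: "unitarily_invariant_norm N"
begin

lemma strict_X1:
  assumes supp: "\<And>a b. X $ a $ b \<noteq> 0 \<Longrightarrow> a \<in> S \<and> b \<notin> S" and nz: "X $ i $ j \<noteq> 0"
  shows "N (ind S) < N (ind S + X)"
proof -
  have ij: "i \<in> S" "j \<notin> S" using supp[OF nz] by auto
  define x where "x = X $ i $ j"
  have x0: "x \<noteq> 0" using nz x_def by simp
  define Y where "Y = pinch (S \<union> {j}) (pinch {i, j} (ind S + X))"
  have Y: "Y = ind S + sm x (Em i j)"
  proof -
    have "\<And>a b. Y $ a $ b = (ind S + sm x (Em i j)) $ a $ b"
    proof -
      fix a b
      show "Y $ a $ b = (ind S + sm x (Em i j)) $ a $ b"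
      proof (cases "X $ a $ b = 0")
        case True
        then have "\<not> (a = i \<and> b = j)" using nz by auto
        then have "Em i j $ a $ b = 0" by (simp add: Em_entry)
        then show ?thesis using True by (cases "a = b") (simp_all add: Y_def pinch_entry ind_entry)
      next
        case False
        then have ab: "a \<in> S" "b \<notin> S" using supp by auto
        then have ne: "a \<noteq> b" "a \<noteq> j" "b \<noteq> i" using ij by auto
        show ?thesis
        proof (cases "a = i \<and> b = j")
          case True then show ?thesis using ij by (simp add: Y_def pinch_entry ind_entry Em_entry x_def)
        next
          case F: False
          show ?thesis
          proof (cases "a = i")
            case True
            then have "b \<noteq> j" using F by simp
            then show ?thesis using True ne by (simp add: Y_def pinch_entry ind_entry Em_entry)
          next
            case False
            then show ?thesis using ne ab by (cases "b = j") (simp_all add: Y_def pinch_entry ind_entry Em_entry)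
          qed
        qed
      qed
    qed
    then show ?thesis by (simp add: vec_eq_iff)
  qed
  define \<phi> where "\<phi> k = (if k = j then cnj x / complex_of_real (cmod x) else 1)" for k
  have u: "unitary_mat (diagm \<phi>)" by (rule unitary_diagm) (simp add: \<phi>_def phase_unit[OF x0])
  have "Y ** diagm \<phi> = ind S + sm (complex_of_real (cmod x)) (Em i j)"
    unfolding Y using ij phase_mult[OF x0]
    by (auto simp: vec_eq_iff diagm_mult_right ind_def Em_def \<phi>_def)
  then have "N Y = N (ind S + sm (complex_of_real (cmod x)) (Em i j))"
    using N_unit_right[OF uin u, of Y] by simp
  moreover have "N Y \<le> N (ind S + X)"
    unfolding Y_def using N_pinch[OF uin] order_trans by blast
  moreover have "N (ind S) < N (ind S + sm (complex_of_real (cmod x)) (Em i j))"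
    using strict_E(1)[OF uin ij] x0 by simp
  ultimately show ?thesis by simp
qed

lemma strict_X2:
  assumes supp: "\<And>a b. X $ a $ b \<noteq> 0 \<Longrightarrow> a \<notin> S \<and> b \<in> S" and nz: "X $ j $ i \<noteq> 0"
  shows "N (ind S) < N (ind S + X)"
proof -
  have ij: "i \<in> S" "j \<notin> S" using supp[OF nz] by auto
  define x where "x = X $ j $ i"
  have x0: "x \<noteq> 0" using nz x_def by simp
  define Y where "Y = pinch (S \<union> {j}) (pinch {i, j} (ind S + X))"
  have Y: "Y = ind S + sm x (Em j i)"
  proof -
    have "\<And>a b. Y $ a $ b = (ind S + sm x (Em j i)) $ a $ b"
    proof -
      fix a b
      show "Y $ a $ b = (ind S + sm x (Em j i)) $ a $ b"
      proof (cases "X $ a $ b = 0")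
        case True
        then have "\<not> (a = j \<and> b = i)" using nz by auto
        then have "Em j i $ a $ b = 0" by (simp add: Em_entry)
        then show ?thesis using True by (cases "a = b") (simp_all add: Y_def pinch_entry ind_entry)
      next
        case False
        then have ab: "a \<notin> S" "b \<in> S" using supp by auto
        then have ne: "a \<noteq> b" "a \<noteq> i" "b \<noteq> j" using ij by auto
        show ?thesis
        proof (cases "a = j \<and> b = i")
          case True then show ?thesis using ij by (simp add: Y_def pinch_entry ind_entry Em_entry x_def)
        next
          case F: False
          show ?thesis
          proof (cases "b = i")
            case True
            then have "a \<noteq> j" using F by simp
            then show ?thesis using True ne by (simp add: Y_def pinch_entry ind_entry Em_entry)
          next
            case False
            then show ?thesis using ne ab by (cases "a = j") (simp_all add: Y_def pinch_entry ind_entry Em_entry)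
          qed
        qed
      qed
    qed
    then show ?thesis by (simp add: vec_eq_iff)
  qed
  define \<phi> where "\<phi> k = (if k = j then cnj x / complex_of_real (cmod x) else 1)" for k
  have u: "unitary_mat (diagm \<phi>)" by (rule unitary_diagm) (simp add: \<phi>_def phase_unit[OF x0])
  have "diagm \<phi> ** Y = ind S + sm (complex_of_real (cmod x)) (Em j i)"
    unfolding Y using ij phase_mult[OF x0]
    by (auto simp: vec_eq_iff diagm_mult_left ind_def Em_def \<phi>_def mult.commute)
  then have "N Y = N (ind S + sm (complex_of_real (cmod x)) (Em j i))"
    using N_unit_left[OF uin u, of Y] by simp
  moreover have "N Y \<le> N (ind S + X)"
    unfolding Y_def using N_pinch[OF uin] order_trans by blast
  moreover have "N (ind S) < N (ind S + sm (complex_of_real (cmod x)) (Em j i))"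
    using strict_E(2)[OF uin ij] x0 by simp
  ultimately show ?thesis by simp
qed

end

definition cin :: "complex^'n \<Rightarrow> complex^'n \<Rightarrow> complex" where
  "cin x y = (\<Sum>i\<in>UNIV. cnj (x $ i) * y $ i)"

definition onb :: "(complex^'n) set \<Rightarrow> bool" where
  "onb B \<longleftrightarrow> (\<forall>x\<in>B. \<forall>y\<in>B. cin x y = (if x = y then 1 else 0))"

lemma cin_add_right: "cin x (y + z) = cin x y + cin x z"
  by (simp add: cin_def distrib_left sum.distrib)

lemma cin_diff_right: "cin x (y - z) = cin x y - cin x z"
  by (simp add: cin_def right_diff_distrib sum_subtractf)

lemma cin_scale_right: "cin x (c *s y) = c * cin x y"
  by (simp add: cin_def sum_distrib_left mult_ac)

lemma cin_scale_left: "cin (c *s x) y = cnj c * cin x y"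
  by (simp add: cin_def sum_distrib_left mult_ac)

lemma cin_sum_right: "finite A \<Longrightarrow> cin x (sum f A) = (\<Sum>a\<in>A. cin x (f a))"
  by (induction A rule: finite_induct) (simp_all add: cin_add_right, simp add: cin_def)

lemma cin_zero_left[simp]: "cin 0 y = 0" by (simp add: cin_def)

lemma cin_adj: "cin x (A *v y) = cin (cadj A *v x) y"
proof -
  have "cin x (A *v y) = (\<Sum>i\<in>UNIV. \<Sum>j\<in>UNIV. cnj (x $ i) * A $ i $ j * y $ j)"
    by (simp add: cin_def matrix_vector_mult_def sum_distrib_left mult_ac)
  also have "\<dots> = (\<Sum>j\<in>UNIV. \<Sum>i\<in>UNIV. cnj (x $ i) * A $ i $ j * y $ j)"
    by (rule sum.swap)
  also have "\<dots> = cin (cadj A *v x) y"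
    by (simp add: cin_def matrix_vector_mult_def sum_distrib_right sum_distrib_left mult_ac)
  finally show ?thesis .
qed

lemma cin_self: "cin x x = complex_of_real (\<Sum>i\<in>UNIV. (cmod (x $ i))^2)"
  unfolding cin_def of_real_sum complex_norm_square by (simp add: mult.commute)

lemma cin_self_eq0: "cin x x = 0 \<Longrightarrow> x = 0"
proof -
  assume "cin x x = 0"
  then have "(\<Sum>i\<in>UNIV. (cmod (x $ i))^2) = 0" unfolding cin_self of_real_eq_0_iff .
  then have "\<forall>i\<in>UNIV. (cmod (x $ i))^2 = 0" by (simp add: sum_nonneg_eq_0_iff)
  then show "x = 0" by (simp add: vec_eq_iff)
qed

lemma onb_independent:
  assumes fin: "finite B" and o: "onb B"
  shows "vec.independent B"
proof -
  have "\<not> vec.dependent B"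
  proof
    assume "vec.dependent B"
    then obtain u v where v: "v \<in> B" "u v \<noteq> 0" and s: "(\<Sum>v\<in>B. u v *s v) = 0"
      using vec.dependent_finite[OF fin] by blast
    have "0 = cin v (\<Sum>w\<in>B. u w *s w)" using s by (simp add: cin_def)
    also have "\<dots> = (\<Sum>w\<in>B. u w * cin v w)" by (simp add: cin_sum_right[OF fin] cin_scale_right)
    also have "\<dots> = (\<Sum>w\<in>B. if w = v then u w else 0)"
      using o v(1) unfolding onb_def by (intro sum.cong) auto
    also have "\<dots> = u v" using fin v(1) by (simp add: sum.delta')
    finally show False using v(2) by simp
  qed
  then show ?thesis by simp
qed

lemma onb_card_le:
  assumes "finite B" "onb B"
  shows "card (B::(complex^'n) set) \<le> CARD('n)"
  using vec.independent_card_le_dim[OF subset_UNIV onb_independent[OF assms]]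
  by (simp add: card_cart_basis)

lemma onb_exists_orth:
  assumes fin: "finite B" and o: "onb B" and c: "card (B::(complex^'n) set) < CARD('n)"
  shows "\<exists>y. y \<noteq> 0 \<and> (\<forall>b\<in>B. cin b y = 0)"
proof (rule ccontr)
  assume H: "\<not> ?thesis"
  have "\<And>k. axis k 1 \<in> vec.span B"
  proof -
    fix k
    define e :: "complex^'n" where "e = axis k 1"
    define y where "y = e - (\<Sum>b\<in>B. cin b e *s b)"
    have "\<forall>b\<in>B. cin b y = 0"
    proof
      fix b assume b: "b \<in> B"
      have "cin b y = cin b e - (\<Sum>b'\<in>B. cin b' e * cin b b')"
        by (simp add: y_def cin_diff_right cin_sum_right[OF fin] cin_scale_right)
      also have "(\<Sum>b'\<in>B. cin b' e * cin b b') = (\<Sum>b'\<in>B. if b' = b then cin b' e else 0)"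
        using o b unfolding onb_def by (intro sum.cong) auto
      also have "\<dots> = cin b e" using fin b by (simp add: sum.delta')
      finally show "cin b y = 0" by simp
    qed
    then have "y = 0" using H by blast
    then have "e = (\<Sum>b\<in>B. cin b e *s b)" by (simp add: y_def)
    also have "\<dots> \<in> vec.span B"
      by (intro vec.span_sum vec.span_scale vec.span_base)
    finally show "axis k 1 \<in> vec.span B" by (simp add: e_def)
  qed
  then have "cart_basis \<subseteq> vec.span B" by (auto simp: cart_basis_def)
  then have "vec.span cart_basis \<subseteq> vec.span B"
    using vec.span_mono vec.span_span by blast
  then have "(UNIV :: (complex^'n) set) \<subseteq> vec.span B" by simp
  then have "vec.dim (UNIV :: (complex^'n) set) \<le> card B" using vec.dim_le_card[OF _ fin] by blast
  then show False using c by (simp add: card_cart_basis)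
qed

definition goodB :: "complex^'n^'n \<Rightarrow> (complex^'n) set \<Rightarrow> bool" where
  "goodB G B \<longleftrightarrow> finite B \<and> onb B \<and> (\<forall>b\<in>B. G *v b = b \<or> G *v b = 0)"

lemma cin_swap: "cin y x = cnj (cin x y)"
  by (simp add: cin_def cnj_sum mult.commute)

lemma onb_insert:
  assumes o: "onb B" and w: "cin w w = 1" and orth: "\<forall>b\<in>B. cin b w = 0"
  shows "onb (insert w B)" and "w \<notin> B"
proof -
  have orth2: "\<forall>b\<in>B. cin w b = 0"
    using orth cin_swap by (metis complex_cnj_zero)
  show "w \<notin> B" using orth w by auto
  then show "onb (insert w B)" using o w orth orth2 unfolding onb_def by auto
qed

lemma good_extend:
  fixes G :: "complex^'n^'n"
  assumes cG: "cadj G = G" and GG: "G ** G = G" and g: "goodB G B" and c: "card B < CARD('n)"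
  shows "\<exists>B'. goodB G B' \<and> card B' = Suc (card B)"
proof -
  have fin: "finite B" and o: "onb B" and gb: "\<forall>b\<in>B. G *v b = b \<or> G *v b = 0"
    using g by (auto simp: goodB_def)
  obtain y where y: "y \<noteq> 0" "\<forall>b\<in>B. cin b y = 0" using onb_exists_orth[OF fin o c] by blast
  have orthG: "\<forall>b\<in>B. cin b (G *v y) = 0"
  proof
    fix b assume b: "b \<in> B"
    have "cin b (G *v y) = cin (G *v b) y" using cin_adj[of b G y] cG by simp
    then show "cin b (G *v y) = 0" using gb b y(2) by auto
  qed
  have GGy: "G *v (G *v y) = G *v y" by (simp add: matrix_vector_mul_assoc GG)
  obtain z where z: "z \<noteq> 0" "\<forall>b\<in>B. cin b z = 0" "G *v z = z \<or> G *v z = 0"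
  proof (cases "G *v y = 0")
    case True
    then show ?thesis using that[of y] y by simp
  next
    case False
    then show ?thesis using that[of "G *v y"] orthG GGy by simp
  qed
  define \<sigma> where "\<sigma> = (\<Sum>i\<in>UNIV. (cmod (z $ i))^2)"
  have cz: "cin z z = complex_of_real \<sigma>" unfolding \<sigma>_def by (rule cin_self)
  define r where "r = sqrt \<sigma>"
  have "cin z z \<noteq> 0" using z(1) cin_self_eq0 by blast
  then have "\<sigma> \<noteq> 0" using cz by auto
  moreover have "\<sigma> \<ge> 0" unfolding \<sigma>_def by (simp add: sum_nonneg)
  ultimately have spos: "\<sigma> > 0" by simp
  then have rpos: "r > 0" by (simp add: r_def)
  have r2: "r * r = \<sigma>" using spos by (simp add: r_def)
  define w where "w = complex_of_real (1 / r) *s z"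
  have "cin w w = complex_of_real (1/r) * complex_of_real (1/r) * cin z z"
    by (simp add: w_def cin_scale_left cin_scale_right)
  also have "\<dots> = complex_of_real ((1/r) * (1/r) * (r * r))" unfolding cz r2 by simp
  also have "\<dots> = 1" using rpos by simp
  finally have ww: "cin w w = 1" .
  have worth: "\<forall>b\<in>B. cin b w = 0" using z(2) by (simp add: w_def cin_scale_right)
  have Gw: "G *v w = w \<or> G *v w = 0"
    using z(3) by (auto simp: w_def vec.scale)
  have "goodB G (insert w B)"
    using onb_insert(1)[OF o ww worth] fin gb Gw by (simp add: goodB_def)
  moreover have "card (insert w B) = Suc (card B)"
    using onb_insert(2)[OF o ww worth] fin by simp
  ultimately show ?thesis by blast
qed

lemma good_full:
  assumes cG: "cadj G = G" and GG: "G ** G = (G :: complex^'n^'n)"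
  shows "\<exists>B. goodB G B \<and> card B = CARD('n)"
proof -
  define M where "M = card ` {B. goodB G B}"
  have "M \<subseteq> {..CARD('n)}"
    unfolding M_def using onb_card_le by (auto simp: goodB_def)
  then have finM: "finite M" by (rule finite_subset) simp
  have "goodB G {}" by (simp add: goodB_def onb_def)
  then have "M \<noteq> {}" by (auto simp: M_def)
  then have "Max M \<in> M" using finM by simp
  then obtain B where B: "goodB G B" "card B = Max M" by (auto simp: M_def)
  have le: "card B \<le> CARD('n)" using B(1) onb_card_le by (auto simp: goodB_def)
  have "\<not> card B < CARD('n)"
  proof
    assume "card B < CARD('n)"
    then obtain B' where "goodB G B'" "card B' = Suc (card B)"
      using good_extend[OF cG GG B(1)] by blast
    then have "Suc (card B) \<in> M" unfolding M_def by (metis image_eqI mem_Collect_eq)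
    then have "Suc (card B) \<le> Max M" using finM by simp
    then show False using B(2) by simp
  qed
  then show ?thesis using B(1) le by (intro exI[of _ B]) simp
qed

lemma diag_proj:
  assumes cG: "cadj G = G" and GG: "G ** G = (G :: complex^'n^'n)"
  shows "\<exists>U S. unitary_mat U \<and> cadj U ** G ** U = ind S"
proof -
  obtain B where B: "goodB G B" "card B = CARD('n)" using good_full[OF cG GG] by blast
  have fin: "finite B" and o: "onb B" and gb: "\<forall>b\<in>B. G *v b = b \<or> G *v b = 0"
    using B(1) by (auto simp: goodB_def)
  obtain f where f: "bij_betw f (UNIV :: 'n set) B"
    using finite_same_card_bij[OF finite fin] B(2) by auto
  have fB: "\<And>c. f c \<in> B" using f by (auto simp: bij_betw_def)
  have finj: "\<And>c d. f c = f d \<longleftrightarrow> c = d" using f by (auto simp: bij_betw_def inj_on_def)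
  define U where "U = (\<chi> r c. f c $ r)"
  have Ucol: "\<And>c d. (cadj U ** U) $ c $ d = cin (f c) (f d)"
    by (simp add: mm_entry cin_def U_def)
  have u: "unitary_mat U"
  proof (rule unitaryI)
    show "cadj U ** U = mat 1"
      using o fB finj unfolding vec_eq_iff Ucol onb_def by auto
  qed
  define S where "S = {d. G *v f d = f d}"
  have "\<And>c d. (cadj U ** G ** U) $ c $ d = cin (f c) (G *v f d)"
    by (simp add: mm_entry cin_def U_def matrix_vector_mult_def sum_distrib_left sum_distrib_right
        mult_ac matrix_mul_assoc[symmetric])
  moreover have "\<And>c d. cin (f c) (G *v f d) = ind S $ c $ d"
  proof -
    fix c d
    have nz: "f d \<noteq> 0" using o fB[of d] unfolding onb_def by force
    show "cin (f c) (G *v f d) = ind S $ c $ d"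
    proof (cases "G *v f d = f d")
      case True
      then show ?thesis using o fB finj unfolding onb_def by (auto simp: ind_def S_def)
    next
      case False
      then have "G *v f d = 0" using gb fB by blast
      then show ?thesis using False by (auto simp: ind_def S_def cin_def)
    qed
  qed
  ultimately have "cadj U ** G ** U = ind S" by (simp add: vec_eq_iff)
  then show ?thesis using u by blast
qed

lemma mm_add_r: "(A + B) ** C = A ** C + B ** (C::complex^'n^'n)"
  by (simp add: vec_eq_iff mm_entry distrib_right sum.distrib)
lemma mm_diff_r: "(A - B) ** C = A ** C - B ** (C::complex^'n^'n)"
  by (simp add: vec_eq_iff mm_entry left_diff_distrib sum_subtractf)
lemma mm_diff_l: "C ** (A - B) = C ** A - C ** (B::complex^'n^'n)"
  by (simp add: vec_eq_iff mm_entry right_diff_distrib sum_subtractf)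
lemma mm_add_l: "C ** (A + B) = C ** A + C ** (B::complex^'n^'n)"
  by (rule matrix_add_ldistrib)

lemma range_proj:
  fixes Q :: "complex^'n^'n"
  assumes QQ: "Q ** Q = Q"
  shows "\<exists>R. cadj R = R \<and> R ** R = R \<and> R ** Q = Q \<and> Q ** R = R"
proof -
  define Qs where "Qs = cadj Q"
  have QsQs: "Qs ** Qs = Qs" using QQ by (simp add: Qs_def cadj_mult[symmetric])
  define M where "M = Q + Qs - mat 1"
  have cM: "cadj M = M" by (simp add: M_def Qs_def cadj_add cadj_diff)
  have ker: "\<forall>x. M *v x = 0 \<longrightarrow> x = 0"
  proof (intro allI impI)
    fix x assume Mx: "M *v x = 0"
    then have e1: "Q *v x + Qs *v x = x"
      by (simp add: M_def matrix_vector_mult_diff_rdistrib matrix_vector_mult_add_rdistrib)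
    have "Q *v (Q *v x + Qs *v x) = Q *v x" using e1 by simp
    then have "Q *v x + Q *v (Qs *v x) = Q *v x"
      by (simp add: matrix_vector_right_distrib matrix_vector_mul_assoc QQ)
    then have e2: "Q *v (Qs *v x) = 0" by simp
    have "cin (Qs *v x) (Qs *v x) = cin x (Q *v (Qs *v x))"
      using cin_adj[of x Q "Qs *v x"] by (simp add: Qs_def)
    then have "Qs *v x = 0" using e2 cin_self_eq0 by (simp add: cin_def)
    then have Qx: "Q *v x = x" using e1 by simp
    have "cin x x = cin (Qs *v x) x" using cin_adj[of x Q x] Qx by (simp add: Qs_def)
    also have "\<dots> = 0" using \<open>Qs *v x = 0\<close> by simp
    finally show "x = 0" by (rule cin_self_eq0)
  qed
  obtain B where BM: "B ** M = mat 1" using matrix_left_invertible_ker[of M] ker by blast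
  then have MB: "M ** B = mat 1" using matrix_left_right_inverse by blast
  have cB: "cadj B = B"
  proof -
    have "cadj B ** M = mat 1" using MB cM by (metis cadj_mat cadj_mult)
    then have "cadj B = cadj B ** (M ** B)" using MB by simp
    also have "\<dots> = B" using \<open>cadj B ** M = mat 1\<close> by (simp add: matrix_mul_assoc)
    finally show ?thesis .
  qed
  have MQ: "M ** Q = Qs ** Q"
    by (simp add: M_def mm_add_r mm_diff_r QQ)
  have QsM: "Qs ** M = Qs ** Q"
    by (simp add: M_def mm_add_l mm_diff_l QsQs)
  have BQs: "B ** Qs = Q ** B"
  proof -
    have "B ** Qs = B ** Qs ** (M ** B)" using MB by simp
    also have "\<dots> = B ** (Qs ** M) ** B" by (simp add: matrix_mul_assoc)
    also have "\<dots> = B ** (M ** Q) ** B" using MQ QsM by simp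
    also have "\<dots> = (B ** M) ** Q ** B" by (simp add: matrix_mul_assoc)
    finally show ?thesis using BM by simp
  qed
  define R where "R = Q ** B"
  have cR: "cadj R = R" unfolding R_def cadj_mult cB using BQs by (simp add: Qs_def)
  have RQ: "R ** Q = Q"
  proof -
    have "R ** Q = B ** (Qs ** Q)" unfolding R_def BQs[symmetric] by (simp add: matrix_mul_assoc)
    also have "\<dots> = B ** (M ** Q)" using MQ by simp
    also have "\<dots> = Q" using BM by (simp add: matrix_mul_assoc)
    finally show ?thesis .
  qed
  have QR: "Q ** R = R" unfolding R_def by (simp add: matrix_mul_assoc QQ)
  have RR: "R ** R = R" by (metis R_def RQ matrix_mul_assoc)
  show ?thesis using cR RR RQ QR by blast
qed

lemma mat1_minus_ind: "mat 1 - ind T = ind (- T)"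
  by (simp add: vec_eq_iff ind_def)

lemma ind_idem: "ind S ** ind S = ind S"
  by (simp add: ind_def diagm_mult_left vec_eq_iff)

lemma conj_minus:
  assumes "unitary_mat U"
  shows "cadj U ** (mat 1 - A) ** U = mat 1 - cadj U ** A ** (U::complex^'n^'n)"
  using assms by (simp add: mm_diff_l mm_diff_r unitary_mat_def)

lemma card_compl_le:
  fixes S T :: "'n::finite set"
  assumes "card S < card T"
  shows "card (- T) \<le> card (- S)"
proof -
  have "card (- T) = CARD('n) - card T" "card (- S) = CARD('n) - card S"
    using card_Diff_subset[of T UNIV] card_Diff_subset[of S UNIV] by (simp_all add: Compl_eq_Diff_UNIV)
  then show ?thesis using assms by simp
qed

theorem lemma2p3:
  fixes N :: "complex ^'n^'n \<Rightarrow> real" and P Q :: "complex ^'n^'n"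
  assumes "unitarily_invariant_norm N"
    and "orth_projection P"
    and "Q ** Q = Q"
    and "N P = N Q"
    and "N (mat 1 - P) = N (mat 1 - Q)"
  shows "cadj Q = Q"
proof -
  note uin = assms(1)
  have PP: "P ** P = P" and cP: "cadj P = P" using assms(2) by (auto simp: orth_projection_def)
  obtain U1 T where U1: "unitary_mat U1" "cadj U1 ** P ** U1 = ind T"
    using diag_proj[OF cP PP] by blast
  have NP: "N P = N (ind T)"
    using N_unit[OF uin unitary_cadj[OF U1(1)] U1(1), of P] U1(2) by simp
  have NIP: "N (mat 1 - P) = N (ind (- T))"
    using N_unit[OF uin unitary_cadj[OF U1(1)] U1(1), of "mat 1 - P"] U1(2)
    by (simp add: conj_minus[OF U1(1)] mat1_minus_ind)
  obtain R where R: "cadj R = R" "R ** R = R" "R ** Q = Q" "Q ** R = R"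
    using range_proj[OF assms(3)] by blast
  obtain U S where U: "unitary_mat U" "cadj U ** R ** U = ind S"
    using diag_proj[OF R(1,2)] by blast
  have UU: "U ** cadj U = mat 1" using U(1) by (simp add: unitary_mat_def)
  define Q' where "Q' = cadj U ** Q ** U"
  have GQ: "ind S ** Q' = Q'"
  proof -
    have "ind S ** Q' = cadj U ** R ** (U ** cadj U) ** Q ** U"
      unfolding Q'_def U(2)[symmetric] by (simp add: matrix_mul_assoc)
    also have "\<dots> = cadj U ** (R ** Q) ** U" using UU by (simp add: matrix_mul_assoc)
    finally show ?thesis using R(3) by (simp add: Q'_def)
  qed
  have QG: "Q' ** ind S = ind S"
  proof -
    have "Q' ** ind S = cadj U ** Q ** (U ** cadj U) ** R ** U"
      unfolding Q'_def U(2)[symmetric] by (simp add: matrix_mul_assoc)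
    also have "\<dots> = cadj U ** (Q ** R) ** U" using UU by (simp add: matrix_mul_assoc)
    finally show ?thesis using R(4) U(2) by simp
  qed
  define X where "X = Q' - ind S"
  have GX: "ind S ** X = X" using GQ by (simp add: X_def mm_diff_l ind_idem)
  have XG: "X ** ind S = 0" using QG by (simp add: X_def mm_diff_r ind_idem)
  have supp: "\<And>a b. X $ a $ b \<noteq> 0 \<Longrightarrow> a \<in> S \<and> b \<notin> S"
  proof -
    fix a b assume nz: "X $ a $ b \<noteq> 0"
    have "(ind S ** X) $ a $ b = (if a \<in> S then 1 else 0) * X $ a $ b"
      by (simp add: ind_def diagm_mult_left)
    then have "a \<in> S" using GX nz by (metis mult_zero_left)
    moreover have "(X ** ind S) $ a $ b = X $ a $ b * (if b \<in> S then 1 else 0)"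
      by (simp add: ind_def diagm_mult_right)
    then have "b \<notin> S" using XG nz by (metis mult_1_right zero_index)
    ultimately show "a \<in> S \<and> b \<notin> S" by simp
  qed
  have NQ: "N Q = N (ind S + X)"
    using N_unit[OF uin unitary_cadj[OF U(1)] U(1), of Q] by (simp add: X_def Q'_def)
  have NIQ: "N (mat 1 - Q) = N (ind (- S) + (- X))"
    using N_unit[OF uin unitary_cadj[OF U(1)] U(1), of "mat 1 - Q"]
    by (simp add: conj_minus[OF U(1)] X_def Q'_def mat1_minus_ind[symmetric] algebra_simps)
  have X0: "X = 0"
  proof (rule ccontr)
    assume "X \<noteq> 0"
    then obtain a0 b0 where nz: "X $ a0 $ b0 \<noteq> 0" by (metis vec_eq_iff zero_index)
    have lt1: "N (ind S) < N (ind T)"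
      using strict_X1[OF uin supp nz] NQ NP assms(4) by simp
    have supp2: "\<And>a b. (- X) $ a $ b \<noteq> 0 \<Longrightarrow> a \<notin> - S \<and> b \<in> - S" using supp by simp
    have nz2: "(- X) $ a0 $ b0 \<noteq> 0" using nz by simp
    have lt2: "N (ind (- S)) < N (ind (- T))"
      using strict_X2[OF uin supp2 nz2] NIQ NIP assms(5) by simp
    show False
    proof (cases "card T \<le> card S")
      case True
      then show False using phi_card[OF uin True] lt1 by simp
    next
      case False
      then have "card (- T) \<le> card (- S)" by (intro card_compl_le) simp
      then show False using phi_card[OF uin] lt2 by fastforce
    qed
  qed
  then have "Q' = ind S" by (simp add: X_def)
  then have "U ** ind S ** cadj U = U ** (cadj U ** Q ** U) ** cadj U"
    by (simp add: Q'_def)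
  also have "\<dots> = (U ** cadj U) ** Q ** (U ** cadj U)" by (simp add: matrix_mul_assoc)
  finally have Qeq: "Q = U ** ind S ** cadj U" using UU by simp
  show "cadj Q = Q" unfolding Qeq by (simp add: cadj_mult matrix_mul_assoc)
qed

end
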